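(* Let $X$ be a nonnegative random variable with cumulative distribution function $F$, let $\gamma>0$ with $\mathbb{E}[\mathrm{e}^{\gamma X}]<\infty$, let $g\in\mathcal{G}$, and suppose there exists an optimal indemnity $\widehat{I}_g\in\mathcal{I}$ for the problem \[ \inf_{I\in\mathcal{I}} \mathbb{E}\Big[\mathrm{e}^{\gamma\,(X-I(X)+\pi(I))}\Big],\qquad \pi(I):=\mathbb{E}[g(I(X))]. \] Let $M:=\mathbb{E}[\mathrm{e}^{\gamma(X-\widehat{I}_g(X))}]$ and $d_g:=\frac{1}{\gamma}\ln(Mg'(0))$. Then the necessary condition satisfied by $\widehat{I}_g$ (namely $\widehat{I}_g(x)=0$ for $x\le d_g$, and for $x>d_g$, $\widehat{I}_g(x)\in(0,x)$ is the unique solution $y\in(0,x)$ of $\mathrm{e}^{\gamma(x-y)}=Mg'(y)$) implies that $\widehat{I}_g\in\mathcal{I}_c$, where \[ \mathcal{I}_c:=\{I\in\mathcal{I}\mid 0\le I(x')-I(x)\le x'-x \text{ for all } 0\le x\le x'\}. \] Moreover, $\widehat{I}_g$ is strictly increasing on $(d_g,\infty)$.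
   Context: $\mathcal{I}:=\{I:\mathbb{R}_+\to\mathbb{R} \text{ continuous} \mid 0\le I(x)\le x \text{ for all } x\ge 0\}$. $\mathcal{G}$ is the set of twice differentiable functions $g:\mathbb{R}_+\to\mathbb{R}_+$ with $g''\ge 0$, $g(0)=0$, $g(x)\ge x$ for all $x\ge 0$, and $g$ not identically equal to $x\mapsto x$ (so $g'\ge1$). *)

theory Defs
  imports "HOL-Probability.Probability"
begin

definition indemnities :: "(real \<Rightarrow> real) set" where
  "indemnities = {I. continuous_on {0..} I \<and> (\<forall>x\<ge>0. 0 \<le> I x \<and> I x \<le> x)}"

definition indemnities_c :: "(real \<Rightarrow> real) set" where
  "indemnities_c = {I \<in> indemnities. \<forall>x x'. 0 \<le> x \<and> x \<le> x' \<longrightarrow>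
                       0 \<le> I x' - I x \<and> I x' - I x \<le> x' - x}"

definition in_G :: "(real \<Rightarrow> real) \<Rightarrow> (real \<Rightarrow> real) \<Rightarrow> bool" where
  "in_G g g' \<longleftrightarrow>
     (\<exists>g''. \<forall>x\<ge>0. (g has_real_derivative g' x) (at x within {0..}) \<and>
                   (g' has_real_derivative g'' x) (at x within {0..}) \<and> g'' x \<ge> 0)
     \<and> (\<forall>x\<ge>0. g x \<ge> 0) \<and> g 0 = 0 \<and> (\<forall>x\<ge>0. g x \<ge> x) \<and> \<not> (\<forall>x\<ge>0. g x = x)"

definition premium :: "'a measure \<Rightarrow> ('a \<Rightarrow> real) \<Rightarrow> (real \<Rightarrow> real) \<Rightarrow> (real \<Rightarrow> real) \<Rightarrow> ennreal" where
  "premium P X g I = (\<integral>\<^sup>+ \<omega>. ennreal (g (I (X \<omega>))) \<partial>P)"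

definition objective :: "'a measure \<Rightarrow> ('a \<Rightarrow> real) \<Rightarrow> real \<Rightarrow> (real \<Rightarrow> real) \<Rightarrow> (real \<Rightarrow> real) \<Rightarrow> ennreal" where
  "objective P X \<gamma> g I =
     (if premium P X g I = \<infinity> then \<infinity>
      else \<integral>\<^sup>+ \<omega>. ennreal (exp (\<gamma> * (X \<omega> - I (X \<omega>) + enn2real (premium P X g I)))) \<partial>P)"

end

theory Submission
  imports Defs
begin

lemma gprime_facts:
  assumes "in_G g g'"
  shows "\<And>a b. 0 \<le> a \<Longrightarrow> a \<le> b \<Longrightarrow> g' a \<le> g' b" and "g' 0 \<ge> 1"
proof -
  obtain g'' where G: "\<forall>x\<ge>0. (g has_real_derivative g' x) (at x within {0..}) \<and>
                   (g' has_real_derivative g'' x) (at x within {0..}) \<and> g'' x \<ge> 0"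
    and g0: "g 0 = 0" and gx: "\<forall>x\<ge>0. g x \<ge> x"
    using assms unfolding in_G_def by blast
  show "g' a \<le> g' b" if ab: "0 \<le> a" "a \<le> b" for a b
  proof (cases "a = b")
    case False
    then have "a < b" using ab by simp
    have "\<exists>x\<in>{a<..<b}. g' b - g' a = (\<lambda>h. g'' x * h) (b - a)"
    proof (rule mvt_simple[OF \<open>a < b\<close>])
      fix x assume "a \<le> x" "x \<le> b"
      then have "(g' has_real_derivative g'' x) (at x within {0..})" using G ab by auto
      then have "(g' has_real_derivative g'' x) (at x within {a..b})"
        by (rule DERIV_subset) (use ab in auto)
      then show "(g' has_derivative (\<lambda>h. g'' x * h)) (at x within {a..b})"
        by (simp add: has_field_derivative_def)
    qed
    then obtain x where "x \<in> {a<..<b}" "g' b - g' a = g'' x * (b - a)" by auto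
    moreover have "g'' x \<ge> 0" using G \<open>x \<in> {a<..<b}\<close> ab by auto
    ultimately show ?thesis using \<open>a < b\<close> by (metis diff_ge_0_iff_ge less_eq_real_def mult_nonneg_nonneg)
  qed simp
  show "g' 0 \<ge> 1"
  proof (rule ccontr)
    assume "\<not> g' 0 \<ge> 1"
    have "((\<lambda>x. g x - x) has_real_derivative g' 0 - 1) (at 0 within {0..})"
      using G by (auto intro!: derivative_eq_intros)
    from has_real_derivative_neg_dec_right[OF this] \<open>\<not> g' 0 \<ge> 1\<close>
    obtain e where "e > 0" "\<forall>h>0. 0 + h \<in> {0..} \<longrightarrow> h < e \<longrightarrow> g 0 - 0 > g (0 + h) - (0 + h)"
      by auto
    then have "g (e/2) - e/2 < 0" using g0 by (metis add_0 diff_zero half_gt_zero less_add_same_cancel2 atLeast_iff less_eq_real_def field_sum_of_halves)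
    then show False using gx[rule_format, of "e/2"] \<open>e > 0\<close> by simp
  qed
qed

theorem corollary2p2:
  fixes P :: "'a measure" and X :: "'a \<Rightarrow> real" and \<gamma> :: real
    and g g' :: "real \<Rightarrow> real" and Ihat :: "real \<Rightarrow> real" and M d :: real
  assumes "prob_space P"
    and "X \<in> borel_measurable P"
    and "\<forall>\<omega>\<in>space P. 0 \<le> X \<omega>"
    and "\<gamma> > 0"
    and "integrable P (\<lambda>\<omega>. exp (\<gamma> * X \<omega>))"
    and "in_G g g'"
    and "Ihat \<in> indemnities"
    and "\<forall>I\<in>indemnities. objective P X \<gamma> g Ihat \<le> objective P X \<gamma> g I"
    and "M = (\<integral>\<omega>. exp (\<gamma> * (X \<omega> - Ihat (X \<omega>))) \<partial>P)"
    and "d = ln (M * g' 0) / \<gamma>"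
    and "\<forall>x. 0 \<le> x \<and> x \<le> d \<longrightarrow> Ihat x = 0"
    and "\<forall>x. x > d \<longrightarrow> 0 < Ihat x \<and> Ihat x < x
            \<and> exp (\<gamma> * (x - Ihat x)) = M * g' (Ihat x)
            \<and> (\<forall>y. 0 < y \<and> y < x \<and> exp (\<gamma> * (x - y)) = M * g' y \<longrightarrow> y = Ihat x)"
  shows "Ihat \<in> indemnities_c \<and> strict_mono_on {d<..} Ihat"
proof -
  note mono = gprime_facts(1)[OF assms(6)]
  have g1: "g' 0 \<ge> 1" using gprime_facts(2)[OF assms(6)] .
  have M0: "M \<ge> 0" unfolding assms(9) by simp
  have eq: "\<And>x. x > d \<Longrightarrow> 0 < Ihat x \<and> Ihat x < x \<and> exp (\<gamma> * (x - Ihat x)) = M * g' (Ihat x)"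
    using assms(12) by blast
  have gam: "\<gamma> > 0" by fact
  have mon: "Ihat x \<le> Ihat x'" if "d < x" "x \<le> x'" for x x'
  proof (rule ccontr)
    assume "\<not> Ihat x \<le> Ihat x'"
    have e1: "0 < Ihat x'" "exp (\<gamma> * (x - Ihat x)) = M * g' (Ihat x)"
      "exp (\<gamma> * (x' - Ihat x')) = M * g' (Ihat x')" using eq that by auto
    have "g' (Ihat x') \<le> g' (Ihat x)" using mono e1 \<open>\<not> Ihat x \<le> Ihat x'\<close> by simp
    then have "M * g' (Ihat x') \<le> M * g' (Ihat x)" using M0 by (simp add: mult_left_mono)
    then have "exp (\<gamma> * (x' - Ihat x')) \<le> exp (\<gamma> * (x - Ihat x))" using e1 by simp
    then have "\<gamma> * (x' - Ihat x') \<le> \<gamma> * (x - Ihat x)" by simp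
    then have "x' - Ihat x' \<le> x - Ihat x" using gam by simp
    then show False using that \<open>\<not> Ihat x \<le> Ihat x'\<close> by simp
  qed
  have smon: "Ihat x < Ihat x'" if "d < x" "x < x'" for x x'
  proof -
    have "Ihat x \<le> Ihat x'" using mon that by simp
    moreover have "Ihat x \<noteq> Ihat x'"
    proof
      assume h: "Ihat x = Ihat x'"
      have "exp (\<gamma> * (x - Ihat x)) = exp (\<gamma> * (x' - Ihat x'))" using eq[of x] eq[of x'] that h by simp
      then have "\<gamma> * (x - Ihat x) = \<gamma> * (x' - Ihat x')" by simp
      then show False using gam h that by simp
    qed
    ultimately show ?thesis by simp
  qed
  have lip: "Ihat x' - Ihat x \<le> x' - x" if "d < x" "x \<le> x'" for x x'
  proof (rule ccontr)
    assume "\<not> Ihat x' - Ihat x \<le> x' - x"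
    then have "x' - Ihat x' < x - Ihat x" by simp
    then have "\<gamma> * (x' - Ihat x') < \<gamma> * (x - Ihat x)" using gam by simp
    then have "exp (\<gamma> * (x' - Ihat x')) < exp (\<gamma> * (x - Ihat x))" by simp
    then have "M * g' (Ihat x') < M * g' (Ihat x)" using eq[of x] eq[of x'] that by simp
    then have "g' (Ihat x') < g' (Ihat x)" using M0 by (meson mult_left_mono not_le)
    moreover have "0 < Ihat x" using eq that by simp
    ultimately have "Ihat x' < Ihat x" using mono by (meson less_le_not_le linorder_le_less_linear)
    then show False using mon[of x x'] that by simp
  qed
  have Mpos: "M > 0"
  proof -
    have "max d 0 + 1 > d" by simp
    then have "exp (\<gamma> * ((max d 0 + 1) - Ihat (max d 0 + 1))) = M * g' (Ihat (max d 0 + 1))"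
      using eq by blast
    then have "M \<noteq> 0" by (metis exp_not_eq_zero mult_zero_left)
    then show ?thesis using M0 by simp
  qed
  have Mg: "M * g' 0 > 0" using Mpos g1 by simp
  have ed: "exp (\<gamma> * d) = M * g' 0" using Mg gam unfolding assms(10) by simp
  have cross: "Ihat x' \<le> x' - d" if "d < x'" for x'
  proof -
    have e1: "0 < Ihat x'" "exp (\<gamma> * (x' - Ihat x')) = M * g' (Ihat x')" using eq that by auto
    have "g' 0 \<le> g' (Ihat x')" using mono e1 by simp
    then have "exp (\<gamma> * d) \<le> exp (\<gamma> * (x' - Ihat x'))" using e1 ed M0 by (simp add: mult_left_mono)
    then have "\<gamma> * d \<le> \<gamma> * (x' - Ihat x')" by simp
    then show ?thesis using gam by simp
  qed
  have I0: "\<forall>x\<ge>0. 0 \<le> Ihat x \<and> Ihat x \<le> x" using assms(7) unfolding indemnities_def by blast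
  have c: "Ihat \<in> indemnities_c"
    unfolding indemnities_c_def
  proof (intro CollectI conjI allI impI, rule assms(7))
    fix x x' :: real assume xx: "0 \<le> x \<and> x \<le> x'"
    have "0 \<le> Ihat x' - Ihat x \<and> Ihat x' - Ihat x \<le> x' - x"
    proof (cases "x \<le> d")
      case True
      then have ix: "Ihat x = 0" using assms(11) xx by blast
      show ?thesis
      proof (cases "x' \<le> d")
        case True then show ?thesis using assms(11) xx ix by auto
      next
        case False then show ?thesis using cross[of x'] ix I0 xx \<open>x \<le> d\<close> by force
      qed
    next
      case False then show ?thesis using mon lip xx by force
    qed
    then show "0 \<le> Ihat x' - Ihat x" "Ihat x' - Ihat x \<le> x' - x" by auto
  qed
  have "strict_mono_on {d<..} Ihat"
    by (rule strict_mono_onI) (use smon in auto)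
  with c show ?thesis by simp
qed

end
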